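(* Let $m\ge 1$ and $\alpha\in(0,1]$. Restrict to elections with $m$ alternatives and to metrics given by the 1-Euclidean space, meaning all agents and alternatives are points of $\mathbb R$ and $d(x,y)=|x-y|$. Then every deterministic voting rule $f$ using ranked preferences with intensities has, under mandatory elicitation, distortion at least $$\frac{1+3\alpha^{-\lfloor m/2\rfloor}}{3+\alpha^{-\lfloor m/2\rfloor}}.$$
   Context: An election $\mathcal E=(N,A,\vec\sigma)$ has agents $N$, alternatives $A$ with $|A|=m$, and for each agent $i$ a preference $\sigma_i=(\pi_i,\Join_i)$. Here $\pi_i:[m]\to A$ is a bijection ($\pi_i(1)$ most preferred) and $\Join_i:[m-1]\to\{\succ,\succ\!\!\succ\}$. The profile $\vec\sigma$ is $\alpha$-consistent with $d$ (mandatory elicitation) if for all $i$ and $j\in[m-1]$: - $\Join_i(j)=\,\succ$ implies $d(i,\pi_i(j+1))\ge d(i,\pi_i(j))>\alpha d(i,\pi_i(j+1))$; - $\Join_i(j)=\,\succ\!\!\succ$ implies $d(i,\pi_i(j))\le\alpha d(i,\pi_i(j+1))$. The distortion of $a$ is $\mathsf{dist}_\alpha(a,\mathcal E)=\sup_d\sum_i d(i,a)/\min_b\sum_i d(i,b)$ over 1-Euclidean metrics $d$ with which $\vec\sigma$ is $\alpha$-consistent. The distortion of $f$ is the supremum of $\mathsf{dist}_\alpha(f(\vec\sigma),\mathcal E)$ over all such elections with $m$ alternatives. *)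

theory Defs
  imports "HOL-Library.Extended_Real"
begin

text \<open>Alternatives are 0,...,m-1 (type nat); agents are 0,...,n-1 with n \<ge> 1.
  A preference is a pair (pi, J): pi maps positions 1..m bijectively onto the
  alternatives (pi 1 most preferred), J maps 1..m-1 to an intensity.\<close>

datatype intensity = Succ | SSucc

type_synonym pref = "(nat \<Rightarrow> nat) \<times> (nat \<Rightarrow> intensity)"

definition valid_profile :: "nat \<Rightarrow> nat \<Rightarrow> (nat \<Rightarrow> pref) \<Rightarrow> bool" where
  "valid_profile m n prof \<longleftrightarrow> (\<forall>i<n. bij_betw (fst (prof i)) {1..m} {0..<m})"

text \<open>1-Euclidean metric: agent i at x i, alternative a at y a, d(i,a) = |x i - y a|.
  Mandatory-elicitation alpha-consistency.\<close>
definition consistent ::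
  "real \<Rightarrow> nat \<Rightarrow> nat \<Rightarrow> (nat \<Rightarrow> pref) \<Rightarrow> (nat \<Rightarrow> real) \<Rightarrow> (nat \<Rightarrow> real) \<Rightarrow> bool" where
  "consistent \<alpha> m n prof x y \<longleftrightarrow>
     (\<forall>i<n. \<forall>j\<in>{1..m-1}.
        (snd (prof i) j = Succ \<longrightarrow>
           \<bar>x i - y (fst (prof i) (j+1))\<bar> \<ge> \<bar>x i - y (fst (prof i) j)\<bar> \<and>
           \<bar>x i - y (fst (prof i) j)\<bar> > \<alpha> * \<bar>x i - y (fst (prof i) (j+1))\<bar>) \<and>
        (snd (prof i) j = SSucc \<longrightarrow>
           \<bar>x i - y (fst (prof i) j)\<bar> \<le> \<alpha> * \<bar>x i - y (fst (prof i) (j+1))\<bar>))"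

definition social_cost :: "nat \<Rightarrow> (nat \<Rightarrow> real) \<Rightarrow> (nat \<Rightarrow> real) \<Rightarrow> nat \<Rightarrow> real" where
  "social_cost n x y a = (\<Sum>i<n. \<bar>x i - y a\<bar>)"

definition opt_cost :: "nat \<Rightarrow> nat \<Rightarrow> (nat \<Rightarrow> real) \<Rightarrow> (nat \<Rightarrow> real) \<Rightarrow> real" where
  "opt_cost m n x y = (MIN b\<in>{0..<m}. social_cost n x y b)"

text \<open>Distortion of alternative a in the election (n agents, m alternatives, profile prof),
  as an extended real (positive/0 = \<infinity>, 0/0 = 0).\<close>
definition dist_alt :: "real \<Rightarrow> nat \<Rightarrow> nat \<Rightarrow> (nat \<Rightarrow> pref) \<Rightarrow> nat \<Rightarrow> ereal" where
  "dist_alt \<alpha> m n prof a =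
     (SUP xy\<in>{(x, y). consistent \<alpha> m n prof x y}.
        ereal (social_cost n (fst xy) (snd xy) a) / ereal (opt_cost m n (fst xy) (snd xy)))"

definition distortion :: "real \<Rightarrow> nat \<Rightarrow> (nat \<Rightarrow> (nat \<Rightarrow> pref) \<Rightarrow> nat) \<Rightarrow> ereal" where
  "distortion \<alpha> m f =
     (SUP np\<in>{(n, prof). n \<ge> 1 \<and> valid_profile m n prof}.
        dist_alt \<alpha> m (fst np) (snd np) (f (fst np) (snd np)))"

end

theory Submission
  imports Defs
begin

definition Jp :: "nat \<Rightarrow> nat \<Rightarrow> intensity" where
  "Jp k j = (if j < 2*k then Succ else SSucc)"

definition okseq :: "real \<Rightarrow> nat \<Rightarrow> (nat \<Rightarrow> real) \<Rightarrow> nat \<Rightarrow> bool" where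
  "okseq \<alpha> k D j \<longleftrightarrow> (Jp k j = Succ \<longrightarrow> D j \<le> D (j+1) \<and> \<alpha> * D (j+1) < D j) \<and>
     (Jp k j = SSucc \<longrightarrow> D j \<le> \<alpha> * D (j+1))"

definition Dfar :: "nat \<Rightarrow> real \<Rightarrow> real \<Rightarrow> real \<Rightarrow> nat \<Rightarrow> real" where
  "Dfar k s r L j = (if j \<le> k then 1 else if j \<le> 2*k then s + (1-s) * r^(j-1-k) else L)"

definition Dnear :: "nat \<Rightarrow> real \<Rightarrow> real \<Rightarrow> real \<Rightarrow> nat \<Rightarrow> real" where
  "Dnear k s r L j = (if j \<le> k then (1-s) * r^(j-1) else if j \<le> 2*k then 1+s else L - s)"

lemma succ_ok:
  fixes a b r \<alpha> :: real
  assumes "0 < a" "a \<le> b" "b \<le> r*a" "\<alpha>*r < 1" "0 < \<alpha>"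
  shows "\<alpha>*b < a"
proof -
  have "\<alpha>*b \<le> \<alpha>*(r*a)" using assms by (simp add: mult_left_mono)
  also have "\<dots> = (\<alpha>*r)*a" by simp
  also have "\<dots> < 1*a" using assms by (intro mult_strict_right_mono) auto
  finally show ?thesis by simp
qed

definition pi1 :: "nat \<Rightarrow> nat \<Rightarrow> nat" where
  "pi1 k j = (if j \<le> k then j + k - 1 else if j \<le> 2*k then j - k - 1 else j - 1)"

definition Prof :: "nat \<Rightarrow> nat \<Rightarrow> pref" where
  "Prof k i = (if i = 0 then ((\<lambda>j. j - 1), Jp k) else (pi1 k, Jp k))"

definition yA :: "nat \<Rightarrow> real \<Rightarrow> real \<Rightarrow> real \<Rightarrow> nat \<Rightarrow> real" where
  "yA k s r L p = (if p < k then -1 else if p < 2*k then s + (1-s)*r^(p-k) else L)"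
definition xA :: "real \<Rightarrow> nat \<Rightarrow> real" where
  "xA s i = (if i = 0 then 0 else s)"
definition yB :: "nat \<Rightarrow> real \<Rightarrow> real \<Rightarrow> real \<Rightarrow> nat \<Rightarrow> real" where
  "yB k s r L p = (if p < k then -(s + (1-s)*r^p) else if p < 2*k then 1 else -L)"
definition xB :: "real \<Rightarrow> nat \<Rightarrow> real" where
  "xB s i = (if i = 0 then -s else 0)"

lemma valid_Prof:
  assumes "m div 2 = k"
  shows "valid_profile m 2 (Prof k)"
proof -
  have b0: "bij_betw (\<lambda>j. j - 1) {1..m} {0..<m}"
    by (rule bij_betw_byWitness[where f'="\<lambda>p. p + 1"]) auto
  have b1: "bij_betw (pi1 k) {1..m} {0..<m}"
    by (rule bij_betw_byWitness[where f'="\<lambda>p. if p < k then p + k + 1 else if p < 2*k then p - k + 1 else p + 1"])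
      (use assms in \<open>auto simp: pi1_def\<close>)
  show ?thesis unfolding valid_profile_def Prof_def using b0 b1
    by (auto simp: less_2_cases_iff)
qed

lemma sc2: "social_cost 2 x y a = \<bar>x 0 - y a\<bar> + \<bar>x 1 - y a\<bar>"
  by (simp add: social_cost_def numeral_2_eq_2)

lemma opt_le: "b < m \<Longrightarrow> opt_cost m n x y \<le> social_cost n x y b"
  unfolding opt_cost_def by (rule Min_le) auto

lemma opt_ge: "0 < m \<Longrightarrow> (\<And>b. b < m \<Longrightarrow> c \<le> social_cost n x y b) \<Longrightarrow> c \<le> opt_cost m n x y"
  unfolding opt_cost_def by (subst Min_ge_iff) auto

lemma ratio_ge:
  fixes c w q p :: real
  assumes "p \<le> c" "w \<le> q" "1 \<le> w" "0 < q" "0 \<le> p"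
  shows "ereal (p / q) \<le> ereal c / ereal w"
proof -
  have "ereal c / ereal w = ereal (c / w)" using assms by (simp add: ereal_divide)
  moreover have "p / q \<le> c / w" using assms by (intro frac_le) auto
  ultimately show ?thesis by simp
qed

locale prm =
  fixes k :: nat and s r L \<alpha> :: real
  assumes k1: "1 \<le> k" and a0: "0 < \<alpha>" and a1: "\<alpha> \<le> 1" and ar: "\<alpha>*r < 1" and r1: "1 \<le> r"
    and s0: "0 \<le> s" and s1: "s < 1" and sr: "(1-s)*r^k = 1+s" and aL: "\<alpha>*L = 4"
begin

lemma alt1: "\<alpha> < 1"
proof -
  have "\<alpha>*1 \<le> \<alpha>*r" using r1 a0 by (intro mult_left_mono) auto
  thus ?thesis using ar by simp
qed

lemma pow_le: "i \<le> k \<Longrightarrow> (1-s)*r^i \<le> 1+s"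
proof -
  assume "i \<le> k"
  hence "r^i \<le> r^k" using r1 by (simp add: power_increasing)
  thus ?thesis using sr s1 by (metis diff_gt_0_iff_gt less_eq_real_def mult_left_mono)
qed

lemma L4: "L \<ge> 4"
proof -
  have "L = 4/\<alpha>" using aL a0 by (simp add: field_simps)
  thus ?thesis using a0 a1 by (simp add: le_divide_eq)
qed

lemma Dfar_ok: assumes "1 \<le> j" "j \<le> 2*k" shows "okseq \<alpha> k (Dfar k s r L) j"
proof (cases "j < k")
  case True thus ?thesis by (auto simp: okseq_def Dfar_def Jp_def alt1)
next
  case False
  show ?thesis
  proof (cases "j = 2*k")
    case True
    have "j - 1 - k \<le> k" using True by simp
    hence "(1-s) * r^(j-1-k) \<le> 1+s" by (rule pow_le)
    hence "s + (1-s) * r^(j-1-k) \<le> \<alpha> * L" using aL s1 by simp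
    thus ?thesis using True k1 by (auto simp: okseq_def Dfar_def Jp_def)
  next
    case False
    hence jlt: "j < 2*k" using assms by simp
    define i where "i = j - 1 - k"
    have pos: "0 < (1-s) * r^i" using s1 r1 by simp
    have ge1: "1 \<le> s + (1-s) * r^i"
    proof -
      have "1 \<le> r^i" using r1 by simp
      hence "(1-s)*1 \<le> (1-s)*r^i" using s1 by (intro mult_left_mono) auto
      thus ?thesis by simp
    qed
    have A: "Dfar k s r L j = (if j = k then 1 else s + (1-s) * r^i)"
      using \<open>\<not> j < k\<close> jlt by (auto simp: Dfar_def i_def)
    have B: "Dfar k s r L (j+1) = s + (1-s) * r^(if j = k then 0 else i+1)"
    proof (cases "j = k")
      case False
      hence "j + 1 - 1 - k = i + 1" using \<open>\<not> j < k\<close> by (simp add: i_def)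
      thus ?thesis using \<open>\<not> j < k\<close> jlt False unfolding Dfar_def by (simp del: power_Suc)
    qed (use k1 in \<open>simp add: Dfar_def\<close>)
    have step: "s + (1-s) * r^(i+1) \<le> r * (s + (1-s) * r^i)"
    proof -
      have "s \<le> r*s" using r1 s0 by (simp add: mult_right_mono[of 1 r s, simplified])
      thus ?thesis by (simp add: algebra_simps)
    qed
    have step2: "s + (1-s) * r^i \<le> s + (1-s) * r^(i+1)"
    proof -
      have "r^i \<le> r^(i+1)" using r1 by (simp add: power_increasing)
      thus ?thesis using s1 by (simp add: mult_left_mono)
    qed
    have "Dfar k s r L j \<le> Dfar k s r L (j+1) \<and> \<alpha> * Dfar k s r L (j+1) < Dfar k s r L j"
    proof (cases "j = k")
      case True thus ?thesis using A B alt1 by auto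
    next
      case False
      have "\<alpha> * (s + (1-s) * r^(i+1)) < s + (1-s) * r^i"
        by (rule succ_ok[OF _ step2 step ar a0]) (use ge1 in simp)
      thus ?thesis using A B False step2 by simp
    qed
    thus ?thesis using jlt by (simp add: okseq_def Jp_def)
  qed
qed

lemma Dnear_ok: assumes "1 \<le> j" "j \<le> 2*k" shows "okseq \<alpha> k (Dnear k s r L) j"
proof (cases "j \<le> k")
  case True
  define i where "i = j - 1"
  have A: "Dnear k s r L j = (1-s) * r^i" using True by (simp add: Dnear_def i_def)
  have B: "Dnear k s r L (j+1) = (1-s) * r^(i+1)"
  proof (cases "j = k")
    case True thus ?thesis using sr assms by (simp add: Dnear_def i_def)
  next
    case False thus ?thesis using \<open>j \<le> k\<close> assms by (simp add: Dnear_def i_def)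
  qed
  have pos: "0 < (1-s) * r^i" using s1 r1 by simp
  have st: "(1-s) * r^i \<le> (1-s) * r^(i+1)"
    using s1 r1 by (intro mult_left_mono) (auto simp: power_increasing)
  have st2: "(1-s) * r^(i+1) \<le> r * ((1-s) * r^i)" by (simp add: algebra_simps)
  have "\<alpha> * ((1-s) * r^(i+1)) < (1-s) * r^i" by (rule succ_ok[OF pos st st2 ar a0])
  thus ?thesis using A B st True k1 by (auto simp: okseq_def Jp_def)
next
  case False
  show ?thesis
  proof (cases "j = 2*k")
    case True
    have "1 + s \<le> \<alpha> * (L - s)" using aL a1 s0 s1 a0
      by (simp add: right_diff_distrib) (smt (verit) mult_left_le_one_le)
    thus ?thesis using True k1 by (auto simp: okseq_def Dnear_def Jp_def)
  next
    case False
    thus ?thesis using \<open>\<not> j \<le> k\<close> assms alt1 s0 by (auto simp: okseq_def Dnear_def Jp_def)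
  qed
qed

lemma posr: "0 < (1-s)*r^i" using s1 r1 by simp

lemma ge1: "1 \<le> s + (1-s) * r^i"
proof -
  have "1 \<le> r^i" using r1 by simp
  hence "(1-s)*1 \<le> (1-s)*r^i" using s1 by (intro mult_left_mono) auto
  thus ?thesis by simp
qed

context
  fixes m assumes mk: "m div 2 = k"
begin

lemma mle: "m \<le> 2*k+1" using mk by linarith

lemma distA0: "1 \<le> j \<Longrightarrow> j \<le> m \<Longrightarrow> \<bar>xA s 0 - yA k s r L (j-1)\<bar> = Dfar k s r L j"
  using mle ge1[of "j-1-k"] L4 by (auto simp: xA_def yA_def Dfar_def)

lemma distA1: "1 \<le> j \<Longrightarrow> j \<le> m \<Longrightarrow> \<bar>xA s 1 - yA k s r L (pi1 k j)\<bar> = Dnear k s r L j"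
  using mle posr[of "j-1"] L4 s1 s0 by (auto simp: xA_def yA_def Dnear_def pi1_def)

lemma distB0: "1 \<le> j \<Longrightarrow> j \<le> m \<Longrightarrow> \<bar>xB s 0 - yB k s r L (j-1)\<bar> = Dnear k s r L j"
  using mle posr[of "j-1"] L4 s1 s0 by (auto simp: xB_def yB_def Dnear_def)

lemma distB1: "1 \<le> j \<Longrightarrow> j \<le> m \<Longrightarrow> \<bar>xB s 1 - yB k s r L (pi1 k j)\<bar> = Dfar k s r L j"
  using mle ge1[of "j-k-1"] L4 by (auto simp: xB_def yB_def Dfar_def pi1_def)

lemma consA: "consistent \<alpha> m 2 (Prof k) (xA s) (yA k s r L)"
  unfolding consistent_def
proof (intro allI impI ballI)
  fix i j assume i: "i < (2::nat)" and j: "j \<in> {1..m-1}"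
  hence j1: "1 \<le> j" "j + 1 \<le> m" "j \<le> 2*k" using mle by auto
  show "(snd (Prof k i) j = Succ \<longrightarrow>
           \<bar>xA s i - yA k s r L (fst (Prof k i) (j+1))\<bar> \<ge> \<bar>xA s i - yA k s r L (fst (Prof k i) j)\<bar> \<and>
           \<bar>xA s i - yA k s r L (fst (Prof k i) j)\<bar> > \<alpha> * \<bar>xA s i - yA k s r L (fst (Prof k i) (j+1))\<bar>) \<and>
        (snd (Prof k i) j = SSucc \<longrightarrow>
           \<bar>xA s i - yA k s r L (fst (Prof k i) j)\<bar> \<le> \<alpha> * \<bar>xA s i - yA k s r L (fst (Prof k i) (j+1))\<bar>)"
  proof (cases "i = 0")
    case True
    have e1: "\<bar>xA s i - yA k s r L (fst (Prof k i) j)\<bar> = Dfar k s r L j"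
      using distA0[of j] j1 True by (simp add: Prof_def)
    have e2: "\<bar>xA s i - yA k s r L (fst (Prof k i) (j+1))\<bar> = Dfar k s r L (j+1)"
      using distA0[of "j+1"] j1 True by (simp add: Prof_def)
    show ?thesis using Dfar_ok[OF j1(1) j1(3)] True unfolding e1 e2 okseq_def by (simp add: Prof_def)
  next
    case False
    hence i1: "i = 1" using i by simp
    have e1: "\<bar>xA s i - yA k s r L (fst (Prof k i) j)\<bar> = Dnear k s r L j"
      using distA1[of j] j1 i1 by (simp add: Prof_def)
    have e2: "\<bar>xA s i - yA k s r L (fst (Prof k i) (j+1))\<bar> = Dnear k s r L (j+1)"
      using distA1[of "j+1"] j1 i1 by (simp add: Prof_def)
    show ?thesis using Dnear_ok[OF j1(1) j1(3)] i1 unfolding e1 e2 okseq_def by (simp add: Prof_def)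
  qed
qed

lemma consB: "consistent \<alpha> m 2 (Prof k) (xB s) (yB k s r L)"
  unfolding consistent_def
proof (intro allI impI ballI)
  fix i j assume i: "i < (2::nat)" and j: "j \<in> {1..m-1}"
  hence j1: "1 \<le> j" "j + 1 \<le> m" "j \<le> 2*k" using mle by auto
  show "(snd (Prof k i) j = Succ \<longrightarrow>
           \<bar>xB s i - yB k s r L (fst (Prof k i) (j+1))\<bar> \<ge> \<bar>xB s i - yB k s r L (fst (Prof k i) j)\<bar> \<and>
           \<bar>xB s i - yB k s r L (fst (Prof k i) j)\<bar> > \<alpha> * \<bar>xB s i - yB k s r L (fst (Prof k i) (j+1))\<bar>) \<and>
        (snd (Prof k i) j = SSucc \<longrightarrow>
           \<bar>xB s i - yB k s r L (fst (Prof k i) j)\<bar> \<le> \<alpha> * \<bar>xB s i - yB k s r L (fst (Prof k i) (j+1))\<bar>)"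
  proof (cases "i = 0")
    case True
    have e1: "\<bar>xB s i - yB k s r L (fst (Prof k i) j)\<bar> = Dnear k s r L j"
      using distB0[of j] j1 True by (simp add: Prof_def)
    have e2: "\<bar>xB s i - yB k s r L (fst (Prof k i) (j+1))\<bar> = Dnear k s r L (j+1)"
      using distB0[of "j+1"] j1 True by (simp add: Prof_def)
    show ?thesis using Dnear_ok[OF j1(1) j1(3)] True unfolding e1 e2 okseq_def by (simp add: Prof_def)
  next
    case False
    hence i1: "i = 1" using i by simp
    have e1: "\<bar>xB s i - yB k s r L (fst (Prof k i) j)\<bar> = Dfar k s r L j"
      using distB1[of j] j1 i1 by (simp add: Prof_def)
    have e2: "\<bar>xB s i - yB k s r L (fst (Prof k i) (j+1))\<bar> = Dfar k s r L (j+1)"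
      using distB1[of "j+1"] j1 i1 by (simp add: Prof_def)
    show ?thesis using Dfar_ok[OF j1(1) j1(3)] i1 unfolding e1 e2 okseq_def by (simp add: Prof_def)
  qed
qed

lemma ratioA: assumes "a0 < m" "a0 < k \<or> 2*k \<le> a0"
  shows "ereal ((2+s)/(2-s)) \<le> ereal (social_cost 2 (xA s) (yA k s r L) a0) / ereal (opt_cost m 2 (xA s) (yA k s r L))"
proof (rule ratio_ge)
  show "2 + s \<le> social_cost 2 (xA s) (yA k s r L) a0"
    using assms L4 s0 s1 by (auto simp: sc2 xA_def yA_def)
  have "k < m" using mk k1 by linarith
  hence "opt_cost m 2 (xA s) (yA k s r L) \<le> social_cost 2 (xA s) (yA k s r L) k" by (rule opt_le)
  thus "opt_cost m 2 (xA s) (yA k s r L) \<le> 2 - s" using k1 s1 by (simp add: sc2 xA_def yA_def)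
  show "1 \<le> opt_cost m 2 (xA s) (yA k s r L)"
  proof (rule opt_ge)
    show "0 < m" using mk k1 by linarith
    fix b show "1 \<le> social_cost 2 (xA s) (yA k s r L) b"
      using ge1[of "b-k"] L4 by (auto simp: sc2 xA_def yA_def)
  qed
qed (use s0 s1 in auto)

lemma ratioB: assumes "a0 < m" "k \<le> a0" "a0 < 2*k"
  shows "ereal ((2+s)/(2-s)) \<le> ereal (social_cost 2 (xB s) (yB k s r L) a0) / ereal (opt_cost m 2 (xB s) (yB k s r L))"
proof (rule ratio_ge)
  show "2 + s \<le> social_cost 2 (xB s) (yB k s r L) a0"
    using assms L4 s0 s1 by (auto simp: sc2 xB_def yB_def)
  have "0 < m" using mk k1 by linarith
  hence "opt_cost m 2 (xB s) (yB k s r L) \<le> social_cost 2 (xB s) (yB k s r L) 0" by (rule opt_le)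
  thus "opt_cost m 2 (xB s) (yB k s r L) \<le> 2 - s" using k1 s1 by (simp add: sc2 xB_def yB_def)
  show "1 \<le> opt_cost m 2 (xB s) (yB k s r L)"
  proof (rule opt_ge)
    show "0 < m" using mk k1 by linarith
    fix b show "1 \<le> social_cost 2 (xB s) (yB k s r L) b"
      using ge1[of "b"] L4 by (auto simp: sc2 xB_def yB_def)
  qed
qed (use s0 s1 in auto)

lemma main_exists: assumes "a0 < m"
  shows "\<exists>xy\<in>{(x, y). consistent \<alpha> m 2 (Prof k) x y}.
     ereal ((2+s)/(2-s)) \<le> ereal (social_cost 2 (fst xy) (snd xy) a0) / ereal (opt_cost m 2 (fst xy) (snd xy))"
proof (cases "k \<le> a0 \<and> a0 < 2*k")
  case True
  show ?thesis by (rule bexI[where x="(xB s, yB k s r L)"]) (use True ratioB[OF assms] consB in auto)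
next
  case False
  hence "a0 < k \<or> 2*k \<le> a0" by auto
  show ?thesis by (rule bexI[where x="(xA s, yA k s r L)"]) (use \<open>a0 < k \<or> 2*k \<le> a0\<close> ratioA[OF assms] consA in auto)
qed

end

end

lemma params:
  fixes \<alpha> z :: real and k :: nat
  assumes k1: "1 \<le> k" and a0: "0 < \<alpha>" and a1: "\<alpha> < 1"
    and z: "z < (1 + 3 * (1/\<alpha>) ^ k) / (3 + (1/\<alpha>) ^ k)"
  shows "\<exists>s r. prm k s r (4/\<alpha>) \<alpha> \<and> z < (2+s)/(2-s)"
proof -
  define A where "A = (1/\<alpha>) ^ k"
  define B where "B = (1 + 3*A) / (3 + A)"
  have "1 < 1/\<alpha>" using a0 a1 by simp
  hence A1: "1 < A" unfolding A_def using k1 by (simp add: one_less_power)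
  have B1: "1 < B" unfolding B_def using A1 by (simp add: field_simps)
  have B3: "B < 3" unfolding B_def using A1 by (simp add: field_simps)
  define z' where "z' = max z 1"
  have z'B: "z' < B" using z B1 unfolding z'_def B_def A_def by simp
  define y where "y = (z' + B) / 2"
  have y1: "1 \<le> y" "y < 3" "z' < y" "y < B" using z'B B3 unfolding y_def z'_def by auto
  define R where "R = (3*y - 1) / (3 - y)"
  have R1: "1 \<le> R" using y1 unfolding R_def by (simp add: field_simps)
  have RA: "R < A"
  proof -
    have "y * (3 + A) < 1 + 3*A" using y1(4) A1 unfolding B_def by (simp add: field_simps)
    thus ?thesis using y1 unfolding R_def by (simp add: field_simps)
  qed
  define r where "r = root k R"
  define s where "s = (R - 1) / (R + 1)"
  have kp: "0 < k" using k1 by simp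
  have rk: "r ^ k = R" unfolding r_def using kp R1 by simp
  have r1: "1 \<le> r" unfolding r_def using kp R1 by simp
  have "r < root k A" unfolding r_def using kp RA by simp
  also have "root k A = 1/\<alpha>" unfolding A_def using kp a0 by (simp add: real_root_power_cancel)
  finally have ar: "\<alpha> * r < 1" using a0 by (simp add: field_simps)
  have s0: "0 \<le> s" "s < 1" unfolding s_def using R1 by (auto simp: field_simps)
  have sr: "(1-s) * r^k = 1+s" unfolding rk s_def using R1 by (simp add: field_simps)
  have "(2+s)/(2-s) = y"
  proof -
    have Rp: "R + 1 \<noteq> 0" using R1 by simp
    have e1: "2+s = (3*R+1)/(R+1)" unfolding s_def using Rp by (simp add: divide_simps)
    have e2: "2-s = (R+3)/(R+1)" unfolding s_def using Rp by (simp add: divide_simps)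
    have "(2+s)/(2-s) = (3*R+1)/(R+3)" unfolding e1 e2 using Rp R1 by (simp add: divide_simps)
    also have "\<dots> = y" unfolding R_def using y1 by (simp add: field_simps)
    finally show ?thesis .
  qed
  hence "z < (2+s)/(2-s)" using y1 unfolding z'_def by simp
  moreover have "prm k s r (4/\<alpha>) \<alpha>"
    using k1 a0 a1 ar r1 s0 sr by unfold_locales auto
  ultimately show ?thesis by blast
qed


definition P0 :: "nat \<Rightarrow> pref" where "P0 i = ((\<lambda>j. j - 1), (\<lambda>_. SSucc))"

theorem theorem8:
  fixes m :: nat and \<alpha> :: real and f :: "nat \<Rightarrow> (nat \<Rightarrow> pref) \<Rightarrow> nat"
  assumes "m \<ge> 1" and "0 < \<alpha>" and "\<alpha> \<le> 1"
    and "\<And>n prof. n \<ge> 1 \<Longrightarrow> valid_profile m n prof \<Longrightarrow> f n prof < m"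
  shows "ereal ((1 + 3 * (1/\<alpha>) ^ (m div 2)) / (3 + (1/\<alpha>) ^ (m div 2))) \<le> distortion \<alpha> m f"
proof (cases "\<alpha> = 1 \<or> m div 2 = 0")
  case True
  have B1: "(1 + 3 * (1/\<alpha>) ^ (m div 2)) / (3 + (1/\<alpha>) ^ (m div 2)) = 1"
    using True by auto
  have vP: "valid_profile m 1 P0" unfolding valid_profile_def P0_def
    by (auto intro!: bij_betw_byWitness[where f'="\<lambda>p. p + 1"])
  have cP: "consistent \<alpha> m 1 P0 (\<lambda>_. 0) (\<lambda>_. 1)"
  proof -
    have "m - 1 = 0" if "\<alpha> \<noteq> 1" using True that assms(1) by auto
    thus ?thesis unfolding consistent_def P0_def by (cases "\<alpha> = 1") auto
  qed
  have "ereal 1 \<le> dist_alt \<alpha> m 1 P0 (f 1 P0)"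
    unfolding dist_alt_def
  proof (rule SUP_upper2[where i="((\<lambda>_. 0), (\<lambda>_. 1))"])
    show "((\<lambda>_. 0), (\<lambda>_. 1)) \<in> {(x, y). consistent \<alpha> m 1 P0 x y}" using cP by simp
    have "opt_cost m 1 (\<lambda>_. 0) (\<lambda>_. 1) = 1"
      unfolding opt_cost_def social_cost_def using assms(1) by (auto intro!: Min_eqI)
    thus "ereal 1 \<le> ereal (social_cost 1 (fst ((\<lambda>_. 0), (\<lambda>_. 1))) (snd ((\<lambda>_. 0::real), (\<lambda>_. 1::real))) (f 1 P0)) /
      ereal (opt_cost m 1 (fst ((\<lambda>_. 0), (\<lambda>_. 1))) (snd ((\<lambda>_. 0), (\<lambda>_. 1))))"
      by (simp add: social_cost_def)
  qed
  also have "\<dots> \<le> distortion \<alpha> m f"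
    unfolding distortion_def by (rule SUP_upper2[where i="(1, P0)"]) (use vP in auto)
  finally show ?thesis using B1 by simp
next
  case False
  define k where "k = m div 2"
  have k1: "1 \<le> k" and a1: "\<alpha> < 1" using False assms unfolding k_def by auto
  have vP: "valid_profile m 2 (Prof k)" by (rule valid_Prof) (simp add: k_def)
  have f2: "f 2 (Prof k) < m" using assms(4)[OF _ vP] by simp
  have "ereal ((1 + 3 * (1/\<alpha>) ^ k) / (3 + (1/\<alpha>) ^ k)) \<le> dist_alt \<alpha> m 2 (Prof k) (f 2 (Prof k))"
    unfolding dist_alt_def le_SUP_iff
  proof (intro allI impI)
    fix y assume "y < ereal ((1 + 3 * (1/\<alpha>) ^ k) / (3 + (1/\<alpha>) ^ k))"
    then obtain z where yz: "y < ereal z" and zB: "ereal z < ereal ((1 + 3 * (1/\<alpha>) ^ k) / (3 + (1/\<alpha>) ^ k))"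
      using ereal_dense2 by blast
    obtain s r where P: "prm k s r (4/\<alpha>) \<alpha>" and zs: "z < (2+s)/(2-s)"
      using params[OF k1 assms(2) a1, of z] zB by auto
    obtain xy where xy: "xy \<in> {(x, y). consistent \<alpha> m 2 (Prof k) x y}"
      and le: "ereal ((2+s)/(2-s)) \<le> ereal (social_cost 2 (fst xy) (snd xy) (f 2 (Prof k))) / ereal (opt_cost m 2 (fst xy) (snd xy))"
      using prm.main_exists[OF P _ f2] k_def by auto
    have "y < ereal ((2+s)/(2-s))" using yz zs less_trans[of y "ereal z"] by simp
    thus "\<exists>i\<in>{(x, y). consistent \<alpha> m 2 (Prof k) x y}. y < ereal (social_cost 2 (fst i) (snd i) (f 2 (Prof k))) / ereal (opt_cost m 2 (fst i) (snd i))"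
      using xy le by (meson less_le_trans)
  qed
  also have "\<dots> \<le> distortion \<alpha> m f"
    unfolding distortion_def by (rule SUP_upper2[where i="(2, Prof k)"]) (use vP in auto)
  finally show ?thesis unfolding k_def .
qed

end
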